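(* Let $F:\mathbb{R}^n\rightrightarrows\mathbb{R}^n$ be continuous with $F(x)$ nonempty, compact and convex for all $x$, assume $\Sigma:\dot x\in F(x)$ is forward complete, and let $X_o,X_u\subset\mathbb{R}^n$ be such that $\Sigma$ is robustly safe with respect to $(X_o,X_u)$, with robust-safety margin $\bar\epsilon_o$. Then for each continuous $\bar\epsilon:\mathbb{R}^n\to\mathbb{R}_{>0}$ with $\bar\epsilon(x)<\bar\epsilon_o(x)$ for all $x$, the set $K_{\bar\epsilon}$ satisfies: (1) if $\mathrm{cl}(X_o)\cap\mathrm{cl}(X_u)=\emptyset$, then $\mathrm{cl}(X_u)\cap\mathrm{cl}(K_{\bar\epsilon})=\emptyset$; (2) if $\mathrm{cl}(X_o)\cap X_u=\emptyset$, then $X_u\cap\mathrm{cl}(K_{\bar\epsilon})=\emptyset$.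
   Context: $\mathbb{B}$ is the closed unit ball. Continuity of a set-valued map means upper and lower semicontinuity. Solutions of a differential inclusion are locally absolutely continuous functions on an interval containing $0$ satisfying the inclusion a.e.; maximal solutions are non-extendable; $\mathcal{S}_{\Sigma'}(x)$ is the set of maximal solutions of $\Sigma'$ with $\phi(0)=x$. Forward complete: every maximal solution is defined on an interval unbounded to the right. $\Sigma_\epsilon$: $\dot x\in F(x)+\epsilon(x)\mathbb{B}$. $\Sigma'$ is safe with respect to $(X_o,X_u)$ if every solution starting in $X_o$ never enters $X_u$. $\Sigma$ is robustly safe with respect to $(X_o,X_u)$ if there is a continuous $\epsilon:\mathbb{R}^n\to\mathbb{R}_{>0}$ (a robust-safety margin) such that $\Sigma_\epsilon$ is safe with respect to $(X_o,X_u)$. For $t\ge0$, $R_{\Sigma'}(t,x):=\{\phi(s):\phi\in\mathcal{S}_{\Sigma'}(x),\ s\in\mathrm{dom}\,\phi\cap[0,t]\}$, and $K_{\bar\epsilon}:=\bigcup_{t\ge0}\bigcup_{x\in X_o}R_{\Sigma_{\bar\epsilon}}(t,x)$. *)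

theory Defs
  imports "HOL-Analysis.Analysis"
begin

definition usc_at :: "('a::metric_space \<Rightarrow> 'b::topological_space set) \<Rightarrow> 'a \<Rightarrow> bool" where
  "usc_at F x \<longleftrightarrow> (\<forall>U. open U \<and> F x \<subseteq> U \<longrightarrow> (\<exists>\<delta>>0. \<forall>y\<in>ball x \<delta>. F y \<subseteq> U))"

definition lsc_at :: "('a::metric_space \<Rightarrow> 'b::topological_space set) \<Rightarrow> 'a \<Rightarrow> bool" where
  "lsc_at F x \<longleftrightarrow> (\<forall>U. open U \<and> F x \<inter> U \<noteq> {} \<longrightarrow> (\<exists>\<delta>>0. \<forall>y\<in>ball x \<delta>. F y \<inter> U \<noteq> {}))"

definition setvalued_continuous :: "('a::metric_space \<Rightarrow> 'b::topological_space set) \<Rightarrow> bool" where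
  "setvalued_continuous F \<longleftrightarrow> (\<forall>x. usc_at F x \<and> lsc_at F x)"

definition inflate :: "('a::real_normed_vector \<Rightarrow> 'a set) \<Rightarrow> ('a \<Rightarrow> real) \<Rightarrow> 'a \<Rightarrow> 'a set" where
  "inflate F eps x = {y + eps x *\<^sub>R b | y b. y \<in> F x \<and> b \<in> cball 0 1}"

definition abs_continuous_on :: "real set \<Rightarrow> (real \<Rightarrow> 'a::real_normed_vector) \<Rightarrow> bool" where
  "abs_continuous_on S f \<longleftrightarrow>
    (\<forall>e>0. \<exists>d>0. \<forall>(n::nat) (a::nat \<Rightarrow> real) b.
        (\<forall>i<n. a i \<le> b i \<and> {a i..b i} \<subseteq> S) \<and>
        (\<forall>i<n. \<forall>j<n. i \<noteq> j \<longrightarrow> b i \<le> a j \<or> b j \<le> a i) \<and>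
        (\<Sum>i<n. b i - a i) < d
        \<longrightarrow> (\<Sum>i<n. norm (f (b i) - f (a i))) < e)"

definition loc_abs_continuous_on :: "real set \<Rightarrow> (real \<Rightarrow> 'a::real_normed_vector) \<Rightarrow> bool" where
  "loc_abs_continuous_on I f \<longleftrightarrow> (\<forall>a b. {a..b} \<subseteq> I \<longrightarrow> abs_continuous_on {a..b} f)"

definition is_solution :: "('a::euclidean_space \<Rightarrow> 'a set) \<Rightarrow> real set \<Rightarrow> (real \<Rightarrow> 'a) \<Rightarrow> bool" where
  "is_solution F I \<phi> \<longleftrightarrow>
    is_interval I \<and> 0 \<in> I \<and> loc_abs_continuous_on I \<phi> \<and>
    (\<exists>N \<in> null_sets lebesgue. \<forall>t \<in> I - N.
        \<exists>v. (\<phi> has_vector_derivative v) (at t within I) \<and> v \<in> F (\<phi> t))"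

definition is_maximal_solution :: "('a::euclidean_space \<Rightarrow> 'a set) \<Rightarrow> real set \<Rightarrow> (real \<Rightarrow> 'a) \<Rightarrow> bool" where
  "is_maximal_solution F I \<phi> \<longleftrightarrow>
    is_solution F I \<phi> \<and>
    \<not> (\<exists>J \<psi>. is_solution F J \<psi> \<and> I \<subset> J \<and> (\<forall>t\<in>I. \<psi> t = \<phi> t))"

definition forward_complete :: "('a::euclidean_space \<Rightarrow> 'a set) \<Rightarrow> bool" where
  "forward_complete F \<longleftrightarrow> (\<forall>I \<phi>. is_maximal_solution F I \<phi> \<longrightarrow> \<not> bdd_above I)"

definition safe :: "('a::euclidean_space \<Rightarrow> 'a set) \<Rightarrow> 'a set \<Rightarrow> 'a set \<Rightarrow> bool" where
  "safe F Xo Xu \<longleftrightarrow>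
    (\<forall>I \<phi>. is_solution F I \<phi> \<and> \<phi> 0 \<in> Xo \<longrightarrow> (\<forall>t\<in>I. t \<ge> 0 \<longrightarrow> \<phi> t \<notin> Xu))"

definition robust_safety_margin :: "('a::euclidean_space \<Rightarrow> 'a set) \<Rightarrow> 'a set \<Rightarrow> 'a set \<Rightarrow> ('a \<Rightarrow> real) \<Rightarrow> bool" where
  "robust_safety_margin F Xo Xu eps \<longleftrightarrow>
    continuous_on UNIV eps \<and> (\<forall>x. eps x > 0) \<and> safe (inflate F eps) Xo Xu"

definition robustly_safe :: "('a::euclidean_space \<Rightarrow> 'a set) \<Rightarrow> 'a set \<Rightarrow> 'a set \<Rightarrow> bool" where
  "robustly_safe F Xo Xu \<longleftrightarrow> (\<exists>eps. robust_safety_margin F Xo Xu eps)"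

definition reach :: "('a::euclidean_space \<Rightarrow> 'a set) \<Rightarrow> real \<Rightarrow> 'a \<Rightarrow> 'a set" where
  "reach F t x = {\<phi> s | I \<phi> s. is_maximal_solution F I \<phi> \<and> \<phi> 0 = x \<and> s \<in> I \<inter> {0..t}}"

definition Kset :: "('a::euclidean_space \<Rightarrow> 'a set) \<Rightarrow> ('a \<Rightarrow> real) \<Rightarrow> 'a set \<Rightarrow> 'a set" where
  "Kset F eps Xo = (\<Union>t\<in>{0..}. \<Union>x\<in>Xo. reach (inflate F eps) t x)"

end

theory Submission
  imports Defs
begin

lemma real_intervals_disj:
  fixes p1 q1 p2 q2 :: real
  assumes "p1 < q1" "p2 < q2" "{p1<..<q1} \<inter> {p2<..<q2} = {}"
  shows "q1 \<le> p2 \<or> q2 \<le> p1"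
proof (rule ccontr)
  assume "\<not> ?thesis"
  hence "max p1 p2 < min q1 q2" using assms by auto
  hence "(max p1 p2 + min q1 q2)/2 \<in> {p1<..<q1} \<inter> {p2<..<q2}" by auto
  thus False using assms(3) by blast
qed

lemma choice_on:
  assumes "\<And>t. P t \<Longrightarrow> \<exists>r. Q t r"
  obtains r where "\<And>t. P t \<Longrightarrow> Q t (r t)"
proof -
  have "\<forall>t. \<exists>r. P t \<longrightarrow> Q t r" using assms by blast
  then obtain r where "\<forall>t. P t \<longrightarrow> Q t (r t)" by (rule choice[THEN exE])
  thus ?thesis using that by blast
qed

lemma ac_lip_bound:
  fixes \<phi> :: "real \<Rightarrow> 'a::real_normed_vector"
  assumes ab: "a \<le> b" and ac: "abs_continuous_on {a..b} \<phi>" and N: "negligible N"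
    and M: "M \<ge> 0"
    and der: "\<And>t. t \<in> {a..b} - N \<Longrightarrow> \<exists>v. (\<phi> has_vector_derivative v) (at t within {a..b}) \<and> norm v \<le> M"
  shows "norm (\<phi> b - \<phi> a) \<le> M * (b - a)"
proof -
  have key: "norm (\<phi> b - \<phi> a) \<le> (M+\<epsilon>)*(b-a) + \<epsilon>" if \<epsilon>: "\<epsilon> > 0" for \<epsilon>
  proof -
    obtain d where d: "d > 0" and dAC: "\<And>(n::nat) (a'::nat\<Rightarrow>real) b'. (\<forall>i<n. a' i \<le> b' i \<and> {a' i..b' i} \<subseteq> {a..b}) \<and>
        (\<forall>i<n. \<forall>j<n. i \<noteq> j \<longrightarrow> b' i \<le> a' j \<or> b' j \<le> a' i) \<and>
        (\<Sum>i<n. b' i - a' i) < d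
        \<Longrightarrow> (\<Sum>i<n. norm (\<phi> (b' i) - \<phi> (a' i))) < \<epsilon>"
    proof -
      from ac[unfolded abs_continuous_on_def, rule_format, OF \<epsilon>] obtain d where "d > 0" and
        "\<forall>(n::nat) (a'::nat\<Rightarrow>real) b'. (\<forall>i<n. a' i \<le> b' i \<and> {a' i..b' i} \<subseteq> {a..b}) \<and>
        (\<forall>i<n. \<forall>j<n. i \<noteq> j \<longrightarrow> b' i \<le> a' j \<or> b' j \<le> a' i) \<and>
        (\<Sum>i<n. b' i - a' i) < d
        \<longrightarrow> (\<Sum>i<n. norm (\<phi> (b' i) - \<phi> (a' i))) < \<epsilon>" by (elim exE conjE)
      thus ?thesis using that by blast
    qed
    have "(indicat_real N has_integral 0) (cbox a b)" using N unfolding negligible_def by blast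
    hence "\<exists>\<gamma>. gauge \<gamma> \<and> (\<forall>D. D tagged_division_of (cbox a b) \<and> \<gamma> fine D \<longrightarrow>
        norm ((\<Sum>(x, k)\<in>D. Henstock_Kurzweil_Integration.content k *\<^sub>R indicat_real N x) - 0) < d)"
      unfolding has_integral using d by blast
    then obtain \<gamma>0 where g0: "gauge \<gamma>0" and g0D': "\<forall>D. D tagged_division_of (cbox a b) \<and> \<gamma>0 fine D \<longrightarrow>
        norm ((\<Sum>(x, k)\<in>D. Henstock_Kurzweil_Integration.content k *\<^sub>R indicat_real N x) - 0) < d"
      by (elim exE conjE) 
    note g0D = g0D'[rule_format, OF conjI]
    have "\<exists>r>0. \<forall>u\<in>{a..b}. \<forall>w\<in>{a..b}. \<bar>u - t\<bar> < r \<and> \<bar>w - t\<bar> < r \<and> w \<le> t \<and> t \<le> u \<longrightarrow>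
             norm (\<phi> u - \<phi> w) \<le> (M+\<epsilon>)*(u-w)" if t: "t \<in> {a..b} - N" for t
    proof -
      obtain v where v: "(\<phi> has_vector_derivative v) (at t within {a..b})" "norm v \<le> M"
        using der t by blast
      from v(1) obtain r where r: "r > 0" and rr: "\<forall>y\<in>{a..b}. norm (y - t) < r \<longrightarrow>
          norm (\<phi> y - \<phi> t - (y - t) *\<^sub>R v) \<le> \<epsilon> * norm (y - t)"
        unfolding has_vector_derivative_def has_derivative_within_alt using \<epsilon> by blast
      show ?thesis
      proof (intro exI[of _ r] conjI r ballI impI)
        fix u w assume uw: "u \<in> {a..b}" "w \<in> {a..b}" "\<bar>u - t\<bar> < r \<and> \<bar>w - t\<bar> < r \<and> w \<le> t \<and> t \<le> u"
        have 1: "norm (\<phi> u - \<phi> t - (u - t) *\<^sub>R v) \<le> \<epsilon> * (u - t)" using rr uw by auto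
        have 2: "norm (\<phi> w - \<phi> t - (w - t) *\<^sub>R v) \<le> \<epsilon> * (t - w)" using rr uw by auto
        have 3: "norm ((u - w) *\<^sub>R v) \<le> M * (u - w)" using v(2) uw
          by (simp add: mult_right_mono mult.commute)
        have eq: "\<phi> u - \<phi> w = (\<phi> u - \<phi> t - (u - t) *\<^sub>R v) - (\<phi> w - \<phi> t - (w - t) *\<^sub>R v) + (u - w) *\<^sub>R v"
          (is "_ = ?X - ?Y + ?Z") by (simp add: algebra_simps)
        have "norm (?X - ?Y + ?Z) \<le> norm ?X + norm ?Y + norm ?Z"
          using norm_triangle_ineq[of "?X - ?Y" ?Z] norm_triangle_ineq4[of ?X ?Y] by linarith
        hence "norm (\<phi> u - \<phi> w) \<le> norm ?X + norm ?Y + norm ?Z" unfolding eq .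
        thus "norm (\<phi> u - \<phi> w) \<le> (M+\<epsilon>)*(u-w)" using 1 2 3 by (simp add: algebra_simps)
      qed
    qed
    then obtain r where r: "\<And>t. t \<in> {a..b} - N \<Longrightarrow> r t > 0 \<and> (\<forall>u\<in>{a..b}. \<forall>w\<in>{a..b}. \<bar>u - t\<bar> < r t \<and> \<bar>w - t\<bar> < r t \<and> w \<le> t \<and> t \<le> u \<longrightarrow>
             norm (\<phi> u - \<phi> w) \<le> (M+\<epsilon>)*(u-w))"
      using choice_on[where P="\<lambda>t. t \<in> {a..b} - N" and Q="\<lambda>t r. r > 0 \<and> (\<forall>u\<in>{a..b}. \<forall>w\<in>{a..b}. \<bar>u - t\<bar> < r \<and> \<bar>w - t\<bar> < r \<and> w \<le> t \<and> t \<le> u \<longrightarrow>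
             norm (\<phi> u - \<phi> w) \<le> (M+\<epsilon>)*(u-w))"] by blast
    define \<gamma> where "\<gamma> t = ball t (if t \<in> {a..b} - N then r t else 1) \<inter> \<gamma>0 t" for t
    have "gauge \<gamma>" unfolding gauge_def \<gamma>_def
    proof (intro allI conjI)
      fix t show "t \<in> ball t (if t \<in> {a..b} - N then r t else 1) \<inter> \<gamma>0 t"
        using g0 r[of t] unfolding gauge_def by (cases "t \<in> {a..b} - N") auto
      show "open (ball t (if t \<in> {a..b} - N then r t else 1) \<inter> \<gamma>0 t)"
        using g0 unfolding gauge_def by auto
    qed
    then obtain D where D: "D tagged_division_of {a..b}" and fD: "\<gamma> fine D"
      using fine_division_exists_real by blast
    have Dfin: "finite D" using tagged_division_ofD(1)[OF D] .
    have DK: "\<exists>p q. K = {p..q} \<and> p \<le> t \<and> t \<le> q \<and> {p..q} \<subseteq> {a..b} \<and> K \<subseteq> \<gamma> t"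
      if tKD: "(t,K) \<in> D" for t K
    proof -
      obtain p q where K: "K = cbox p q" using tagged_division_ofD(4)[OF D tKD] by blast
      have "t \<in> K" "K \<subseteq> {a..b}" using tagged_division_ofD(2,3)[OF D tKD] by auto
      moreover have "K \<subseteq> \<gamma> t" using fD tKD unfolding fine_def by blast
      ultimately show ?thesis using K by (intro exI[of _ p] exI[of _ q]) auto
    qed
    define g where "g pr = \<phi> (Sup (snd pr)) - \<phi> (Inf (snd pr))" for pr :: "real \<times> real set"
    define D2 where "D2 = {pr\<in>D. fst pr \<in> N \<and> Henstock_Kurzweil_Integration.content (snd pr) \<noteq> 0}"
    have D2D: "D2 \<subseteq> D" unfolding D2_def by auto
    have "(\<lambda>(x,K). \<phi>(Sup K) - \<phi>(Inf K)) = g" unfolding g_def by auto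
    hence "\<phi> b - \<phi> a = sum g D" using additive_tagged_division_1[OF ab D, of \<phi>] by simp
    hence "norm (\<phi> b - \<phi> a) \<le> sum (\<lambda>pr. norm (g pr)) D" by (simp add: norm_sum)
    also have "\<dots> = sum (\<lambda>pr. norm (g pr)) (D - D2) + sum (\<lambda>pr. norm (g pr)) D2"
      using sum.subset_diff[OF D2D Dfin] by simp
    also have "\<dots> \<le> (M+\<epsilon>)*(b-a) + \<epsilon>"
    proof (rule add_mono)
      have "sum (\<lambda>pr. norm (g pr)) (D - D2) \<le> sum (\<lambda>pr. (M+\<epsilon>) * Henstock_Kurzweil_Integration.content (snd pr)) (D - D2)"
      proof (rule sum_mono)
        fix pr assume pr: "pr \<in> D - D2"
        obtain t K where tK: "pr = (t,K)" by fastforce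
        obtain p q where pq: "K = {p..q}" "p \<le> t" "t \<le> q" "{p..q} \<subseteq> {a..b}" "K \<subseteq> \<gamma> t"
          using DK pr tK by blast
        have SI: "Sup K = q" "Inf K = p" using pq by auto
        show "norm (g pr) \<le> (M+\<epsilon>) * Henstock_Kurzweil_Integration.content (snd pr)"
        proof (cases "t \<in> N")
          case False
          hence tN: "t \<in> {a..b} - N" using pq by auto
          have "{p..q} \<subseteq> ball t (r t)" using pq unfolding \<gamma>_def using tN by auto
          moreover have "p \<in> {p..q}" "q \<in> {p..q}" using pq by auto
          ultimately have "p \<in> ball t (r t)" "q \<in> ball t (r t)" by blast+
          hence "\<bar>q - t\<bar> < r t" "\<bar>p - t\<bar> < r t" by (auto simp: dist_real_def)
          hence "norm (\<phi> q - \<phi> p) \<le> (M+\<epsilon>)*(q-p)" using r[OF tN] pq by auto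
          thus ?thesis using tK SI pq unfolding g_def by simp
        next
          case True
          hence "Henstock_Kurzweil_Integration.content K = 0" using pr tK unfolding D2_def by auto
          hence "q = p" using pq by simp
          thus ?thesis using tK SI pq unfolding g_def by simp
        qed
      qed
      also have "\<dots> \<le> sum (\<lambda>pr. (M+\<epsilon>) * Henstock_Kurzweil_Integration.content (snd pr)) D"
        by (rule sum_mono2[OF Dfin]) (use M \<epsilon> in auto)
      also have "\<dots> = (M+\<epsilon>) * sum (\<lambda>(x,l). Henstock_Kurzweil_Integration.content l) D"
        by (simp add: sum_distrib_left split_beta)
      also have "\<dots> = (M+\<epsilon>)*(b-a)"
        using additive_content_tagged_division[of D a b] D ab by simp
      finally show "sum (\<lambda>pr. norm (g pr)) (D - D2) \<le> (M+\<epsilon>)*(b-a)" .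
    next
      have D2fin: "finite D2" using D2D Dfin finite_subset by blast
      obtain h where h: "bij_betw h {0..<card D2} D2" using ex_bij_betw_nat_finite[OF D2fin] by blast
      define n where "n = card D2"
      define a' where "a' i = Inf (snd (h i))" for i
      define b' where "b' i = Sup (snd (h i))" for i
      have hD2: "h i \<in> D2" if "i < n" for i using h that unfolding n_def bij_betw_def by auto
      have ID: "\<exists>t. (t, {a' i..b' i}) \<in> D \<and> h i = (t, {a' i..b' i}) \<and> a' i < b' i \<and> {a' i..b' i} \<subseteq> {a..b}"
        if "i < n" for i
      proof -
        obtain t K where tK: "h i = (t,K)" by fastforce
        have tKD: "(t,K) \<in> D" "Henstock_Kurzweil_Integration.content K \<noteq> 0" using hD2[OF that] tK unfolding D2_def by auto
        obtain p q where pq: "K = {p..q}" "p \<le> t" "t \<le> q" "{p..q} \<subseteq> {a..b}"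
          using DK tKD by blast
        have "p < q" using tKD pq by auto
        thus ?thesis using pq tK tKD unfolding a'_def b'_def by auto
      qed
      have sumeq: "(\<Sum>i<n. f (h i)) = sum f D2" for f :: "real \<times> real set \<Rightarrow> real"
        using sum.reindex_bij_betw[OF h, of f] unfolding n_def by (simp add: atLeast0LessThan)
      have "(\<Sum>i<n. norm (\<phi> (b' i) - \<phi> (a' i))) < \<epsilon>"
      proof (rule dAC, intro conjI allI impI)
        fix i assume "i < n"
        thus "a' i \<le> b' i" "{a' i..b' i} \<subseteq> {a..b}" using ID by force+
      next
        fix i j assume ij: "i < n" "j < n" "i \<noteq> j"
        have "h i \<noteq> h j" using h ij unfolding bij_betw_def inj_on_def n_def by auto
        then obtain ti tj where "(ti, {a' i..b' i}) \<in> D" "(tj, {a' j..b' j}) \<in> D"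
          "(ti, {a' i..b' i}) \<noteq> (tj, {a' j..b' j})" "a' i < b' i" "a' j < b' j"
          using ID[OF ij(1)] ID[OF ij(2)] by force
        hence "interior {a' i..b' i} \<inter> interior {a' j..b' j} = {}" using tagged_division_ofD(5)[OF D] by metis
        thus "b' i \<le> a' j \<or> b' j \<le> a' i"
          using real_intervals_disj \<open>a' i < b' i\<close> \<open>a' j < b' j\<close> by auto
      next
        have "(\<Sum>i<n. b' i - a' i) = sum (\<lambda>pr. Henstock_Kurzweil_Integration.content (snd pr)) D2"
        proof -
          have "(\<Sum>i<n. b' i - a' i) = (\<Sum>i<n. Henstock_Kurzweil_Integration.content (snd (h i)))"
          proof (rule sum.cong[OF refl])
            fix i assume "i \<in> {..<n}"
            then obtain t where "h i = (t, {a' i..b' i})" "a' i < b' i" using ID by force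
            thus "b' i - a' i = Henstock_Kurzweil_Integration.content (snd (h i))" by simp
          qed
          thus ?thesis using sumeq[of "\<lambda>pr. Henstock_Kurzweil_Integration.content (snd pr)"] by simp
        qed
        also have "\<dots> = sum (\<lambda>(x,k). Henstock_Kurzweil_Integration.content k *\<^sub>R indicat_real N x) D2"
          by (rule sum.cong) (auto simp: D2_def)
        also have "\<dots> \<le> sum (\<lambda>(x,k). Henstock_Kurzweil_Integration.content k *\<^sub>R indicat_real N x) D"
          by (rule sum_mono2[OF Dfin D2D]) (auto simp: indicator_def)
        also have "\<dots> < d"
        proof -
          have "\<gamma>0 fine D" using fD unfolding fine_def \<gamma>_def by blast
          hence "norm ((\<Sum>(x, k)\<in>D. Henstock_Kurzweil_Integration.content k *\<^sub>R indicat_real N x) - 0) < d" using g0D D by simp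
          thus ?thesis by simp
        qed
        finally show "(\<Sum>i<n. b' i - a' i) < d" .
      qed
      moreover have "(\<Sum>i<n. norm (\<phi> (b' i) - \<phi> (a' i))) = sum (\<lambda>pr. norm (g pr)) D2"
        using sumeq[of "\<lambda>pr. norm (g pr)"] unfolding g_def a'_def b'_def by simp
      ultimately show "sum (\<lambda>pr. norm (g pr)) D2 \<le> \<epsilon>" by simp
    qed
    finally show ?thesis .
  qed
  show ?thesis
  proof (rule field_le_epsilon)
    fix e :: real assume e: "e > 0"
    define \<epsilon> where "\<epsilon> = e / (b - a + 1)"
    have \<epsilon>: "\<epsilon> > 0" using e ab unfolding \<epsilon>_def by auto
    have "\<epsilon> * (b - a) + \<epsilon> = \<epsilon> * (b - a + 1)" by (simp add: algebra_simps)
    also have "\<dots> = e" unfolding \<epsilon>_def using ab by simp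
    finally have "\<epsilon> * (b - a) + \<epsilon> = e" .
    thus "norm (\<phi> b - \<phi> a) \<le> M * (b - a) + e" using key[OF \<epsilon>] by (simp add: algebra_simps)
  qed
qed

lemma ac_add:
  fixes f g :: "real \<Rightarrow> 'a::real_normed_vector"
  assumes "abs_continuous_on S f" "abs_continuous_on S g"
  shows "abs_continuous_on S (\<lambda>t. f t + g t)"
  unfolding abs_continuous_on_def
proof (intro allI impI)
  fix e :: real assume e: "e > 0"
  obtain d1 where d1: "d1 > 0" and D1: "\<forall>(n::nat) (a::nat \<Rightarrow> real) b.
        (\<forall>i<n. a i \<le> b i \<and> {a i..b i} \<subseteq> S) \<and>
        (\<forall>i<n. \<forall>j<n. i \<noteq> j \<longrightarrow> b i \<le> a j \<or> b j \<le> a i) \<and>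
        (\<Sum>i<n. b i - a i) < d1
        \<longrightarrow> (\<Sum>i<n. norm (f (b i) - f (a i))) < e/2"
    using assms(1)[unfolded abs_continuous_on_def, rule_format, OF half_gt_zero[OF e]] by (elim exE conjE)
  obtain d2 where d2: "d2 > 0" and D2: "\<forall>(n::nat) (a::nat \<Rightarrow> real) b.
        (\<forall>i<n. a i \<le> b i \<and> {a i..b i} \<subseteq> S) \<and>
        (\<forall>i<n. \<forall>j<n. i \<noteq> j \<longrightarrow> b i \<le> a j \<or> b j \<le> a i) \<and>
        (\<Sum>i<n. b i - a i) < d2
        \<longrightarrow> (\<Sum>i<n. norm (g (b i) - g (a i))) < e/2"
    using assms(2)[unfolded abs_continuous_on_def, rule_format, OF half_gt_zero[OF e]] by (elim exE conjE)
  show "\<exists>d>0. \<forall>(n::nat) (a::nat \<Rightarrow> real) b.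
        (\<forall>i<n. a i \<le> b i \<and> {a i..b i} \<subseteq> S) \<and>
        (\<forall>i<n. \<forall>j<n. i \<noteq> j \<longrightarrow> b i \<le> a j \<or> b j \<le> a i) \<and>
        (\<Sum>i<n. b i - a i) < d
        \<longrightarrow> (\<Sum>i<n. norm (f (b i) + g (b i) - (f (a i) + g (a i)))) < e"
  proof (intro exI[of _ "min d1 d2"] conjI allI impI)
    show "min d1 d2 > 0" using d1 d2 by simp
    fix n :: nat and a b :: "nat \<Rightarrow> real"
    assume H: "(\<forall>i<n. a i \<le> b i \<and> {a i..b i} \<subseteq> S) \<and>
        (\<forall>i<n. \<forall>j<n. i \<noteq> j \<longrightarrow> b i \<le> a j \<or> b j \<le> a i) \<and>
        (\<Sum>i<n. b i - a i) < min d1 d2"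
    have 1: "(\<Sum>i<n. norm (f (b i) - f (a i))) < e/2" using D1 H by auto
    have 2: "(\<Sum>i<n. norm (g (b i) - g (a i))) < e/2" using D2 H by auto
    have "(\<Sum>i<n. norm (f (b i) + g (b i) - (f (a i) + g (a i)))) \<le>
          (\<Sum>i<n. norm (f (b i) - f (a i)) + norm (g (b i) - g (a i)))"
    proof (rule sum_mono)
      fix i
      have "f (b i) + g (b i) - (f (a i) + g (a i)) = (f (b i) - f (a i)) + (g (b i) - g (a i))"
        by (simp add: algebra_simps)
      thus "norm (f (b i) + g (b i) - (f (a i) + g (a i))) \<le> norm (f (b i) - f (a i)) + norm (g (b i) - g (a i))"
        by (metis norm_triangle_ineq)
    qed
    also have "\<dots> < e" using 1 2 by (simp add: sum.distrib)
    finally show "(\<Sum>i<n. norm (f (b i) + g (b i) - (f (a i) + g (a i)))) < e" .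
  qed
qed

lemma lip_ac:
  fixes f :: "real \<Rightarrow> 'a::real_normed_vector"
  assumes L: "L \<ge> 0" and lip: "\<And>u v. u \<in> S \<Longrightarrow> v \<in> S \<Longrightarrow> norm (f u - f v) \<le> L * \<bar>u - v\<bar>"
  shows "abs_continuous_on S f"
  unfolding abs_continuous_on_def
proof (intro allI impI)
  fix e :: real assume e: "e > 0"
  show "\<exists>d>0. \<forall>(n::nat) (a::nat \<Rightarrow> real) b.
        (\<forall>i<n. a i \<le> b i \<and> {a i..b i} \<subseteq> S) \<and>
        (\<forall>i<n. \<forall>j<n. i \<noteq> j \<longrightarrow> b i \<le> a j \<or> b j \<le> a i) \<and>
        (\<Sum>i<n. b i - a i) < d
        \<longrightarrow> (\<Sum>i<n. norm (f (b i) - f (a i))) < e"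
  proof (intro exI[of _ "e / (L + 1)"] conjI allI impI)
    show "e / (L + 1) > 0" using e L by simp
    fix n :: nat and a b :: "nat \<Rightarrow> real"
    assume H: "(\<forall>i<n. a i \<le> b i \<and> {a i..b i} \<subseteq> S) \<and>
        (\<forall>i<n. \<forall>j<n. i \<noteq> j \<longrightarrow> b i \<le> a j \<or> b j \<le> a i) \<and>
        (\<Sum>i<n. b i - a i) < e / (L + 1)"
    have "(\<Sum>i<n. norm (f (b i) - f (a i))) \<le> (\<Sum>i<n. L * (b i - a i))"
    proof (rule sum_mono)
      fix i assume "i \<in> {..<n}"
      hence ab: "a i \<le> b i" "{a i..b i} \<subseteq> S" using H by auto
      hence "a i \<in> {a i..b i}" "b i \<in> {a i..b i}" by auto
      hence "a i \<le> b i" "a i \<in> S" "b i \<in> S" using ab by blast+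
      thus "norm (f (b i) - f (a i)) \<le> L * (b i - a i)" using lip[of "b i" "a i"] by simp
    qed
    also have "\<dots> = L * (\<Sum>i<n. b i - a i)" by (simp add: sum_distrib_left)
    also have "\<dots> \<le> L * (e / (L + 1))" using H L by (intro mult_left_mono) auto
    also have "\<dots> < e" using L e by (simp add: field_simps)
    finally show "(\<Sum>i<n. norm (f (b i) - f (a i))) < e" .
  qed
qed

lemma ac_continuous:
  fixes f :: "real \<Rightarrow> 'a::real_normed_vector"
  assumes "abs_continuous_on {a..b} f"
  shows "continuous_on {a..b} f"
  unfolding continuous_on_iff
proof (intro ballI allI impI)
  fix x e assume x: "x \<in> {a..b}" and e: "(e::real) > 0"
  obtain d where d: "d > 0" and D: "\<forall>(n::nat) (a'::nat \<Rightarrow> real) b'.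
        (\<forall>i<n. a' i \<le> b' i \<and> {a' i..b' i} \<subseteq> {a..b}) \<and>
        (\<forall>i<n. \<forall>j<n. i \<noteq> j \<longrightarrow> b' i \<le> a' j \<or> b' j \<le> a' i) \<and>
        (\<Sum>i<n. b' i - a' i) < d
        \<longrightarrow> (\<Sum>i<n. norm (f (b' i) - f (a' i))) < e"
    using assms[unfolded abs_continuous_on_def, rule_format, OF e] by (elim exE conjE)
  show "\<exists>d>0. \<forall>x'\<in>{a..b}. dist x' x < d \<longrightarrow> dist (f x') (f x) < e"
  proof (intro exI[of _ d] conjI ballI impI d)
    fix x' assume x': "x' \<in> {a..b}" and dx: "dist x' x < d"
    have "(\<Sum>i<(1::nat). norm (f ((\<lambda>_. max x x') i) - f ((\<lambda>_. min x x') i))) < e"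
    proof -
      have "max x x' - min x x' < d" using dx by (auto simp: dist_real_def max_def min_def)
      moreover have "{min x x'..max x x'} \<subseteq> {a..b}" using x x' by auto
      ultimately show ?thesis using D[rule_format, of 1 "\<lambda>_. min x x'" "\<lambda>_. max x x'"] by simp
    qed
    thus "dist (f x') (f x) < e"
      by (cases "x \<le> x'") (auto simp: dist_norm norm_minus_commute max_def min_def)
  qed
qed

lemma inflate_mono:
  assumes "0 < e1 x" "e1 x \<le> e2 x" "v \<in> inflate F e1 x"
  shows "v \<in> inflate F e2 x"
proof -
  obtain y b where v: "v = y + e1 x *\<^sub>R b" "y \<in> F x" "b \<in> cball 0 1"
    using assms(3) unfolding inflate_def by blast
  have "v = y + e2 x *\<^sub>R ((e1 x / e2 x) *\<^sub>R b)" using v assms by simp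
  moreover have "(e1 x / e2 x) *\<^sub>R b \<in> cball 0 1"
  proof -
    have "e1 x / e2 x \<le> 1" "e1 x / e2 x \<ge> 0" using assms by auto
    moreover have "norm ((e1 x / e2 x) *\<^sub>R b) = (e1 x / e2 x) * norm b" using assms by simp
    moreover have "(e1 x / e2 x) * norm b \<le> 1" using mult_le_one[of "e1 x / e2 x" "norm b"] v(3) \<open>e1 x / e2 x \<le> 1\<close> by simp
    ultimately have "norm ((e1 x / e2 x) *\<^sub>R b) \<le> 1" by linarith
    thus ?thesis by simp
  qed
  ultimately show ?thesis using v unfolding inflate_def by blast
qed


lemma cont_nhds:
  fixes f :: "'a::metric_space \<Rightarrow> real"
  assumes "continuous_on UNIV f" "e > 0"
  shows "eventually (\<lambda>x. \<bar>f x - f y\<bar> < e) (nhds y)"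
proof -
  obtain d where "d > 0" "\<forall>x'. dist x' y < d \<longrightarrow> dist (f x') (f y) < e"
    using assms unfolding continuous_on_iff by blast
  thus ?thesis unfolding eventually_nhds_metric by (auto simp: dist_real_def)
qed

lemma good_nbhd:
  fixes F :: "'a::euclidean_space \<Rightarrow> 'a set"
  assumes cont: "setvalued_continuous F" and cpt: "\<And>x. F x \<noteq> {} \<and> compact (F x)"
    and ce: "continuous_on UNIV eps" and ceo: "continuous_on UNIV eps_o"
    and pos: "\<And>x. eps x > 0" and lt: "eps y < eps_o y"
  obtains R0 \<delta> M where "R0 > 0" "\<delta> > 0" "M > 0"
    "\<And>a v. a \<in> ball y R0 \<Longrightarrow> v \<in> inflate F eps a \<Longrightarrow> norm v \<le> M"
    "\<And>a b v w. a \<in> ball y R0 \<Longrightarrow> b \<in> ball y R0 \<Longrightarrow> v \<in> inflate F eps a \<Longrightarrow> norm w \<le> \<delta> \<Longrightarrow> v + w \<in> inflate F eps_o b"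
proof -
  define \<delta> where "\<delta> = (eps_o y - eps y) / 4"
  have \<delta>: "\<delta> > 0" using lt unfolding \<delta>_def by simp
  define U where "U = (\<Union>q\<in>F y. ball q (\<delta>/2))"
  have "open U" unfolding U_def by auto
  moreover have "F y \<subseteq> U" unfolding U_def using \<delta> by force
  moreover have "usc_at F y" using cont unfolding setvalued_continuous_def by blast
  ultimately obtain r3 where r3: "r3 > 0" "\<forall>a\<in>ball y r3. F a \<subseteq> U"
    unfolding usc_at_def by blast
  have ev3: "eventually (\<lambda>a. F a \<subseteq> U) (nhds y)"
    unfolding eventually_nhds_metric using r3 by (intro exI[of _ r3]) (auto simp: dist_commute)
  have "F y \<subseteq> (\<Union>q\<in>F y. ball q (\<delta>/4))" using \<delta> by force
  then obtain Q where Q: "Q \<subseteq> F y" "finite Q" "F y \<subseteq> (\<Union>q\<in>Q. ball q (\<delta>/4))"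
    using compactE_image[of "F y" "F y" "\<lambda>q. ball q (\<delta>/4)"] cpt by blast
  have "\<forall>q\<in>Q. eventually (\<lambda>b. F b \<inter> ball q (\<delta>/4) \<noteq> {}) (nhds y)"
  proof
    fix q assume "q \<in> Q"
    hence "F y \<inter> ball q (\<delta>/4) \<noteq> {}" using Q \<delta> by auto
    then obtain r where r: "r > 0" "\<forall>b\<in>ball y r. F b \<inter> ball q (\<delta>/4) \<noteq> {}"
    proof -
      have "lsc_at F y" using cont unfolding setvalued_continuous_def by blast
      from this[unfolded lsc_at_def, rule_format, OF conjI[OF open_ball \<open>F y \<inter> ball q (\<delta>/4) \<noteq> {}\<close>]]
      show ?thesis using that by blast
    qed
    thus "eventually (\<lambda>b. F b \<inter> ball q (\<delta>/4) \<noteq> {}) (nhds y)"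
      unfolding eventually_nhds_metric by (intro exI[of _ r]) (auto simp: dist_commute)
  qed
  hence ev4: "eventually (\<lambda>b. \<forall>q\<in>Q. F b \<inter> ball q (\<delta>/4) \<noteq> {}) (nhds y)"
    by (rule eventually_ball_finite[OF Q(2), where P="\<lambda>b q. F b \<inter> ball q (\<delta>/4) \<noteq> {}"])
  have ev1: "eventually (\<lambda>x. \<bar>eps x - eps y\<bar> < \<delta>) (nhds y)" using cont_nhds[OF ce \<delta>] .
  have ev2: "eventually (\<lambda>x. \<bar>eps_o x - eps_o y\<bar> < \<delta>) (nhds y)" using cont_nhds[OF ceo \<delta>] .
  have "eventually (\<lambda>x. \<bar>eps x - eps y\<bar> < \<delta> \<and> \<bar>eps_o x - eps_o y\<bar> < \<delta> \<and> F x \<subseteq> U \<and>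
          (\<forall>q\<in>Q. F x \<inter> ball q (\<delta>/4) \<noteq> {})) (nhds y)"
    by (intro eventually_conj ev1 ev2 ev3 ev4)
  then obtain R0 where R0: "R0 > 0" and R0P': "\<forall>x. dist x y < R0 \<longrightarrow> \<bar>eps x - eps y\<bar> < \<delta> \<and> \<bar>eps_o x - eps_o y\<bar> < \<delta> \<and> F x \<subseteq> U \<and>
          (\<forall>q\<in>Q. F x \<inter> ball q (\<delta>/4) \<noteq> {})"
    unfolding eventually_nhds_metric by (elim exE conjE)
  note R0P = R0P'[rule_format]
  have inb: "dist x y < R0" if "x \<in> ball y R0" for x using that by (simp add: dist_commute)
  obtain B where B: "\<forall>q\<in>F y. norm q \<le> B"
    using compact_imp_bounded[of "F y"] cpt unfolding bounded_iff by blast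
  define M where "M = \<bar>B\<bar> + eps y + 2*\<delta> + 1"
  have M: "M > 0" unfolding M_def using pos[of y] \<delta> by simp
  show ?thesis
  proof (rule that[OF R0 \<delta> M])
    fix a v assume a: "a \<in> ball y R0" and v: "v \<in> inflate F eps a"
    obtain f u where fu: "v = f + eps a *\<^sub>R u" "f \<in> F a" "u \<in> cball 0 1"
      using v unfolding inflate_def by blast
    have "f \<in> U" using R0P[OF inb[OF a]] fu by blast
    then obtain q where q: "q \<in> F y" "dist q f < \<delta>/2" unfolding U_def by auto
    have "norm f \<le> norm q + dist q f" using norm_triangle_ineq[of q "f - q"] by (simp add: dist_norm norm_minus_commute)
    hence nf: "norm f \<le> B + \<delta>/2" using q B by fastforce
    have "norm (eps a *\<^sub>R u) = eps a * norm u" using pos[of a] by simp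
    also have "\<dots> \<le> eps a" using fu(3) pos[of a] by (simp add: mult_left_le)
    finally have "norm (eps a *\<^sub>R u) \<le> eps a" .
    moreover have "eps a < eps y + \<delta>" using R0P[OF inb[OF a]] by linarith
    moreover have "norm v \<le> norm f + norm (eps a *\<^sub>R u)" unfolding fu(1) by (rule norm_triangle_ineq)
    ultimately show "norm v \<le> M" using nf abs_ge_self[of B] \<delta>
      unfolding M_def by linarith
  next
    fix a b v and w :: 'a assume a: "a \<in> ball y R0" and b: "b \<in> ball y R0" and v: "v \<in> inflate F eps a"
      and w: "norm w \<le> \<delta>"
    obtain f u where fu: "v = f + eps a *\<^sub>R u" "f \<in> F a" "u \<in> cball 0 1"
      using v unfolding inflate_def by blast
    have Pa: "\<bar>eps a - eps y\<bar> < \<delta> \<and> \<bar>eps_o a - eps_o y\<bar> < \<delta> \<and> F a \<subseteq> U \<and>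
          (\<forall>q\<in>Q. F a \<inter> ball q (\<delta>/4) \<noteq> {})" using R0P[OF inb[OF a]] .
    have Pb: "\<bar>eps b - eps y\<bar> < \<delta> \<and> \<bar>eps_o b - eps_o y\<bar> < \<delta> \<and> F b \<subseteq> U \<and>
          (\<forall>q\<in>Q. F b \<inter> ball q (\<delta>/4) \<noteq> {})" using R0P[OF inb[OF b]] .
    have "f \<in> U" using Pa fu by blast
    then obtain q where q: "q \<in> F y" "dist q f < \<delta>/2" unfolding U_def by auto
    then obtain q' where q': "q' \<in> Q" "dist q' q < \<delta>/4" using Q(3) by auto
    have "F b \<inter> ball q' (\<delta>/4) \<noteq> {}" using Pb q'(1) by blast
    then obtain g where g: "g \<in> F b" "dist q' g < \<delta>/4" by auto
    have "dist f g \<le> dist f q + dist q q' + dist q' g" using dist_triangle[of f q' q] dist_triangle[of f g q'] by linarith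
    hence fg: "norm (f - g) < \<delta>" using q q' g by (simp add: dist_norm dist_commute norm_minus_commute)
    define rest where "rest = f - g + eps a *\<^sub>R u + w"
    have "norm (eps a *\<^sub>R u) \<le> eps a"
    proof -
      have "norm (eps a *\<^sub>R u) = eps a * norm u" using pos[of a] by simp
      also have "\<dots> \<le> eps a" using fu(3) pos[of a] by (simp add: mult_left_le)
      finally show ?thesis .
    qed
    hence "norm rest \<le> norm (f - g) + eps a + norm w"
      unfolding rest_def using norm_triangle_ineq[of "f - g + eps a *\<^sub>R u" w]
        norm_triangle_ineq[of "f - g" "eps a *\<^sub>R u"] by linarith
    moreover have "eps a < eps y + \<delta>" using Pa[THEN conjunct1] by (simp add: abs_less_iff)
    moreover have "eps_o b > eps_o y - \<delta>" using Pb[THEN conjunct2, THEN conjunct1] by (simp add: abs_less_iff)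
    moreover have "eps_o y = eps y + 4 * \<delta>" unfolding \<delta>_def by (simp add: field_simps)
    ultimately have nr: "norm rest < eps_o b" using fg w by linarith
    have eob: "eps_o b > 0" using nr by (metis norm_ge_zero le_less_trans)
    have "v + w = g + eps_o b *\<^sub>R ((1 / eps_o b) *\<^sub>R rest)"
      using eob unfolding rest_def fu(1) by (simp add: algebra_simps)
    moreover have "(1 / eps_o b) *\<^sub>R rest \<in> cball 0 1"
      using nr eob by (simp add: divide_simps)
    ultimately show "v + w \<in> inflate F eps_o b" using g(1) unfolding inflate_def by blast
  qed
qed


lemma lin_vd:
  fixes w :: "'a::real_normed_vector"
  assumes "h \<noteq> (0::real)"
  shows "((\<lambda>t. ((t - c)/h) *\<^sub>R w) has_vector_derivative (1/h) *\<^sub>R w) (at t within S)"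
proof -
  have d1: "((\<lambda>t. (t - c)/h) has_field_derivative 1/h) (at t within S)"
    using assms by (auto intro!: derivative_eq_intros)
  have d2: "((\<lambda>t. w) has_vector_derivative 0) (at t within S)" by (rule has_vector_derivative_const)
  show ?thesis using has_vector_derivative_scaleR[OF d1 d2] by simp
qed

lemma max_lip: "\<bar>max 0 ((u - c)/h) - max 0 ((v - c)/h)\<bar> \<le> \<bar>u - v\<bar> / h" if "h > 0" for u v c h :: real
proof -
  have "\<bar>max 0 ((u - c)/h) - max 0 ((v - c)/h)\<bar> \<le> \<bar>(u - c)/h - (v - c)/h\<bar>" by (simp add: max_def abs_if)
  also have "\<dots> = \<bar>u - v\<bar> / h" using that by (simp add: diff_divide_distrib[symmetric])
  finally show ?thesis .
qed

lemma reach_nbhd: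
  fixes F :: "'a::euclidean_space \<Rightarrow> 'a set"
  assumes cont: "setvalued_continuous F" and cpt: "\<And>x. F x \<noteq> {} \<and> compact (F x)"
    and marg: "robust_safety_margin F Xo Xu eps_o"
    and ce: "continuous_on UNIV eps" and pos: "\<And>x. eps x > 0" and lt: "\<And>x. eps x < eps_o x"
    and yo: "y \<notin> closure Xo" and yK: "y \<in> closure (Kset F eps Xo)"
  shows "\<exists>\<rho>>0. ball y \<rho> \<inter> Xu = {}"
proof -
  have ceo: "continuous_on UNIV eps_o" and safe: "safe (inflate F eps_o) Xo Xu"
    using marg unfolding robust_safety_margin_def by auto
  obtain R0 \<delta> M where R0: "R0 > 0" and \<delta>: "\<delta> > 0" and M: "M > 0"
    and bnd: "\<And>a v. a \<in> ball y R0 \<Longrightarrow> v \<in> inflate F eps a \<Longrightarrow> norm v \<le> M"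
    and incl: "\<And>a b v w. a \<in> ball y R0 \<Longrightarrow> b \<in> ball y R0 \<Longrightarrow> v \<in> inflate F eps a \<Longrightarrow> norm w \<le> \<delta> \<Longrightarrow> v + w \<in> inflate F eps_o b"
    using good_nbhd[OF cont cpt ce ceo pos lt[of y]] by blast
  obtain Rx where Rx: "Rx > 0" "\<And>x. x \<in> Xo \<Longrightarrow> dist x y \<ge> Rx"
    using yo unfolding closure_approachable by (meson not_less)
  define R where "R = min (R0/2) Rx"
  have R: "R > 0" "R \<le> R0/2" "R \<le> Rx" using R0 Rx unfolding R_def by auto
  define \<rho> where "\<rho> = min (R/2) (\<delta> * R / (4 * M))"
  have \<rho>: "\<rho> > 0" "\<rho> \<le> R/2" "\<rho> \<le> \<delta> * R / (4 * M)" using R \<delta> M unfolding \<rho>_def by auto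
  show ?thesis
  proof (intro exI[of _ \<rho>] conjI \<rho>(1))
    show "ball y \<rho> \<inter> Xu = {}"
    proof (rule ccontr)
      assume "ball y \<rho> \<inter> Xu \<noteq> {}"
      then obtain y' where y': "y' \<in> ball y \<rho>" "y' \<in> Xu" by blast
      obtain z where z: "z \<in> Kset F eps Xo" "dist z y < \<rho>"
        using yK \<rho>(1) unfolding closure_approachable by blast
      from z(1) obtain tt x where x: "x \<in> Xo" and zr: "z \<in> reach (inflate F eps) tt x"
        unfolding Kset_def by blast
      from zr obtain I \<phi> s where msol: "is_maximal_solution (inflate F eps) I \<phi>"
        and \<phi>0: "\<phi> 0 = x" and sI': "s \<in> I \<inter> {0..tt}" and zs: "z = \<phi> s"
        unfolding reach_def by blast
      have sI: "s \<in> I" and s0: "0 \<le> s" using sI' by auto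
      have sol: "is_solution (inflate F eps) I \<phi>" using msol unfolding is_maximal_solution_def by blast
      note solD = sol[unfolded is_solution_def]
      have Iint: "is_interval I" and I0: "0 \<in> I" and lac: "loc_abs_continuous_on I \<phi>"
        using solD by simp_all
      obtain N where N: "N \<in> null_sets lebesgue" and Nder': "\<forall>t \<in> I - N.
          \<exists>v. (\<phi> has_vector_derivative v) (at t within I) \<and> v \<in> inflate F eps (\<phi> t)"
        using solD[THEN conjunct2, THEN conjunct2, THEN conjunct2] by (elim bexE)
      note Nder = Nder'[rule_format]
      have subI: "{p..q} \<subseteq> I" if "p \<in> I" "q \<in> I" for p q
      proof
        fix r assume "r \<in> {p..q}"
        thus "r \<in> I" using Iint[unfolded is_interval_1, rule_format, of p q r] that by simp
      qed
      have ac: "abs_continuous_on {p..q} \<phi>" if "p \<in> I" "q \<in> I" for p q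
        using lac subI[OF that] unfolding loc_abs_continuous_on_def by blast
      have c0s: "continuous_on {0..s} \<phi>" using ac_continuous[OF ac[OF I0 sI]] .
      define S where "S = {0..s} \<inter> \<phi> -` (- ball y R)"
      have Scl: "closed S" unfolding S_def
        by (rule continuous_closed_preimage[OF c0s]) auto
      have 0: "0 \<in> S" unfolding S_def using s0 Rx(2)[OF x] \<phi>0 R(3) by (auto simp: dist_commute)
      have Sbdd: "bdd_above S" unfolding S_def by (auto intro: bdd_aboveI[of _ s])
      define t0 where "t0 = Sup S"
      have t0S: "t0 \<in> S" unfolding t0_def using closed_contains_Sup[OF _ Sbdd Scl] 0 by blast
      hence t0: "0 \<le> t0" "t0 \<le> s" "dist y (\<phi> t0) \<ge> R" unfolding S_def by auto
      have inball: "\<phi> t \<in> ball y R" if "t0 < t" "t \<le> s" for t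
      proof (rule ccontr)
        assume "\<phi> t \<notin> ball y R"
        hence "t \<in> S" unfolding S_def using that t0 by auto
        hence "t \<le> t0" unfolding t0_def by (rule cSup_upper[OF _ Sbdd])
        thus False using that by simp
      qed
      have t0I: "t0 \<in> I" using subI[OF I0 sI] t0 by auto
      have lip: "norm (\<phi> s - \<phi> t0) \<le> M * (s - t0)"
      proof (rule ac_lip_bound[OF t0(2) ac[OF t0I sI], of "N \<union> {t0}"])
        show "negligible (N \<union> {t0})" using N by (simp add: negligible_iff_null_sets)
        show "M \<ge> 0" using M by simp
        fix t assume t: "t \<in> {t0..s} - (N \<union> {t0})"
        hence tIN: "t \<in> I - N" using subI[OF t0I sI] by auto
        obtain v where v: "(\<phi> has_vector_derivative v) (at t within I)" "v \<in> inflate F eps (\<phi> t)"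
          using Nder[OF tIN] by blast
        have "\<phi> t \<in> ball y R" using inball t by auto
        hence "\<phi> t \<in> ball y R0" using R by auto
        hence "norm v \<le> M" using bnd v(2) by blast
        moreover have "(\<phi> has_vector_derivative v) (at t within {t0..s})"
          using has_vector_derivative_within_subset[OF v(1) subI[OF t0I sI]] .
        ultimately show "\<exists>v. (\<phi> has_vector_derivative v) (at t within {t0..s}) \<and> norm v \<le> M" by blast
      qed
      have "R - \<rho> \<le> norm (\<phi> s - \<phi> t0)"
      proof -
        have "dist y (\<phi> t0) \<le> dist y z + dist z (\<phi> t0)" by (rule dist_triangle)
        thus ?thesis using t0(3) z(2) zs by (simp add: dist_norm norm_minus_commute dist_commute)
      qed
      hence st0: "R - \<rho> \<le> M * (s - t0)" using lip by linarith
      define h where "h = (R - \<rho>) / M"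
      have h: "h > 0" unfolding h_def using \<rho> R M by simp
      have hst: "h \<le> s - t0" unfolding h_def using st0 M by (simp add: divide_le_eq mult.commute)
      define c where "c = s - h"
      have c: "t0 \<le> c" "0 \<le> c" "c < s" unfolding c_def using hst h t0 by auto
      define w where "w = y' - z"
      have nw: "norm w < 2 * \<rho>"
      proof -
        have "norm w \<le> dist y' y + dist z y" unfolding w_def using dist_triangle[of y' z y]
          by (simp add: dist_norm norm_minus_commute)
        thus ?thesis using y'(1) z(2) by (simp add: dist_commute)
      qed
      have nwh: "norm ((1/h) *\<^sub>R w) \<le> \<delta>"
      proof -
        have "norm ((1/h) *\<^sub>R w) = norm w / h" using h by simp
        also have "\<dots> \<le> 2 * \<rho> / h" using nw h by (simp add: divide_right_mono)
        also have "\<dots> = 2 * \<rho> * M / (R - \<rho>)" unfolding h_def using M by simp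
        also have "\<dots> \<le> 2 * \<rho> * M / (R/2)"
          using \<rho> M R by (intro divide_left_mono) (auto intro!: mult_pos_pos)
        also have "\<dots> = 4 * M * \<rho> / R" using R by (simp add: field_simps)
        also have "\<dots> \<le> 4 * M * (\<delta> * R / (4 * M)) / R"
          using \<rho> M R by (intro divide_right_mono mult_left_mono) auto
        also have "\<dots> = \<delta>" using M R by (simp add: field_simps)
        finally show ?thesis .
      qed
      define g where "g t = max 0 ((t - c)/h)" for t
      define \<psi> where "\<psi> t = \<phi> t + g t *\<^sub>R w" for t
      define J where "J = I \<inter> {..s}"
      have Jsub: "J \<subseteq> I" unfolding J_def by auto
      have solJ: "is_solution (inflate F eps_o) J \<psi>"
        unfolding is_solution_def
      proof (intro conjI)
        show "is_interval J" unfolding J_def by (intro is_interval_Int Iint is_interval_ic)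
        show "0 \<in> J" unfolding J_def using I0 s0 by auto
        show "loc_abs_continuous_on J \<psi>" unfolding loc_abs_continuous_on_def
        proof (intro allI impI)
          fix p q assume pq: "{p..q} \<subseteq> J"
          show "abs_continuous_on {p..q} \<psi>"
          proof (cases "p \<le> q")
            case False
            hence E: "{p..q} = {}" by simp
            show ?thesis unfolding abs_continuous_on_def
            proof (intro allI impI exI[of _ 1] conjI)
              fix e :: real and n :: nat and a b :: "nat \<Rightarrow> real"
              assume e: "e > 0" and H: "(\<forall>i<n. a i \<le> b i \<and> {a i..b i} \<subseteq> {p..q}) \<and>
                (\<forall>i<n. \<forall>j<n. i \<noteq> j \<longrightarrow> b i \<le> a j \<or> b j \<le> a i) \<and> (\<Sum>i<n. b i - a i) < 1"
              have "n = 0"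
              proof (rule ccontr)
                assume "n \<noteq> 0"
                hence "a 0 \<le> b 0 \<and> {a 0..b 0} \<subseteq> {p..q}" using H by auto
                thus False using E by auto
              qed
              thus "(\<Sum>i<n. norm (\<psi> (b i) - \<psi> (a i))) < e" using e by simp
            qed simp
          next
            case True
            hence "p \<in> I" "q \<in> I" using pq Jsub by auto
            hence a1: "abs_continuous_on {p..q} \<phi>" by (rule ac)
            have a2: "abs_continuous_on {p..q} (\<lambda>t. g t *\<^sub>R w)"
            proof (rule lip_ac[of "norm w / h"])
              show "norm w / h \<ge> 0" using h by simp
              fix u v
              have "norm (g u *\<^sub>R w - g v *\<^sub>R w) = \<bar>g u - g v\<bar> * norm w"
                by (metis norm_scaleR scaleR_left_diff_distrib)
              also have "\<dots> \<le> (\<bar>u - v\<bar> / h) * norm w"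
                unfolding g_def by (rule mult_right_mono[OF max_lip[OF h]]) simp
              finally show "norm (g u *\<^sub>R w - g v *\<^sub>R w) \<le> norm w / h * \<bar>u - v\<bar>" by (simp add: mult.commute)
            qed
            show ?thesis unfolding \<psi>_def by (rule ac_add[OF a1 a2])
          qed
        qed
        show "\<exists>N'\<in>null_sets lebesgue. \<forall>t\<in>J - N'. \<exists>v. (\<psi> has_vector_derivative v) (at t within J) \<and> v \<in> inflate F eps_o (\<psi> t)"
        proof (intro bexI[of _ "N \<union> {c}"] ballI)
          show "N \<union> {c} \<in> null_sets lebesgue" using N by (simp add: negligible_iff_null_sets[symmetric])
          fix t assume t: "t \<in> J - (N \<union> {c})"
          hence tIN: "t \<in> I - N" and tJ: "t \<in> J" and tc: "t \<noteq> c" and ts: "t \<le> s" using Jsub unfolding J_def by auto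
          obtain v where v: "(\<phi> has_vector_derivative v) (at t within I)" "v \<in> inflate F eps (\<phi> t)"
            using Nder[OF tIN] by blast
          have vJ: "(\<phi> has_vector_derivative v) (at t within J)"
            by (rule has_vector_derivative_within_subset[OF v(1) Jsub])
          show "\<exists>v. (\<psi> has_vector_derivative v) (at t within J) \<and> v \<in> inflate F eps_o (\<psi> t)"
          proof (cases "t < c")
            case True
            have "(\<psi> has_vector_derivative v) (at t within J)"
            proof (rule has_vector_derivative_transform_within[OF vJ _ tJ])
              show "0 < c - t" using True by simp
              fix t' assume "t' \<in> J" "dist t' t < c - t"
              hence "t' < c" by (auto simp: dist_real_def)
              hence "g t' = 0" unfolding g_def using h by (simp add: divide_le_0_iff)
              thus "\<phi> t' = \<psi> t'" unfolding \<psi>_def by simp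
            qed
            moreover have "\<psi> t = \<phi> t"
            proof -
              have "g t = 0" unfolding g_def using True h by (simp add: divide_le_0_iff)
              thus ?thesis unfolding \<psi>_def by simp
            qed
            moreover have "v \<in> inflate F eps_o (\<phi> t)"
              using inflate_mono[of eps "\<phi> t" eps_o v F] pos lt v(2) less_imp_le by blast
            ultimately show ?thesis by auto
          next
            case False
            hence tc': "c < t" using tc by simp
            have d: "((\<lambda>t. \<phi> t + ((t - c)/h) *\<^sub>R w) has_vector_derivative v + (1/h) *\<^sub>R w) (at t within J)"
              using has_vector_derivative_add[OF vJ lin_vd] h by simp
            have "(\<psi> has_vector_derivative v + (1/h) *\<^sub>R w) (at t within J)"
            proof (rule has_vector_derivative_transform_within[OF d _ tJ])
              show "0 < t - c" using tc' by simp
              fix t' assume "t' \<in> J" "dist t' t < t - c"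
              hence "t' > c" by (auto simp: dist_real_def)
              hence "g t' = (t' - c)/h" unfolding g_def using h by simp
              thus "\<phi> t' + ((t' - c)/h) *\<^sub>R w = \<psi> t'" unfolding \<psi>_def by simp
            qed
            moreover have "v + (1/h) *\<^sub>R w \<in> inflate F eps_o (\<psi> t)"
            proof (rule incl[OF _ _ v(2) nwh])
              have "\<phi> t \<in> ball y R" using inball c tc' ts by auto
              thus a: "\<phi> t \<in> ball y R0" using R by auto
              have g01: "0 \<le> g t" "g t \<le> 1" unfolding g_def c_def using ts h by (auto simp: divide_le_eq)
              have "norm (g t *\<^sub>R w) \<le> norm w" using g01 by (simp add: mult_left_le_one_le)
              hence "dist y (\<psi> t) \<le> dist y (\<phi> t) + norm w" unfolding \<psi>_def
                using dist_triangle[of y "\<phi> t + g t *\<^sub>R w" "\<phi> t"] by (simp add: dist_norm)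
              thus "\<psi> t \<in> ball y R0" using \<open>\<phi> t \<in> ball y R\<close> nw \<rho> R by simp
            qed
            ultimately show ?thesis by blast
          qed
        qed
      qed
      have "\<psi> 0 = x"
      proof -
        have "g 0 = 0" unfolding g_def using c h by (simp add: divide_le_0_iff)
        thus ?thesis unfolding \<psi>_def using \<phi>0 by simp
      qed
      hence "\<forall>t\<in>J. t \<ge> 0 \<longrightarrow> \<psi> t \<notin> Xu" using safe solJ x unfolding safe_def by blast
      moreover have "s \<in> J" unfolding J_def using sI by auto
      moreover have "\<psi> s = y'"
      proof -
        have "g s = 1" unfolding g_def c_def using h by simp
        thus ?thesis unfolding \<psi>_def w_def zs by simp
      qed
      ultimately show False using s0 y'(2) by auto
    qed
  qed
qed


theorem lemma9:
  fixes F :: "real^'n \<Rightarrow> (real^'n) set"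
    and Xo Xu :: "(real^'n) set"
    and eps_o :: "real^'n \<Rightarrow> real"
  assumes "setvalued_continuous F"
    and "\<And>x. F x \<noteq> {} \<and> compact (F x) \<and> convex (F x)"
    and "forward_complete F"
    and "robust_safety_margin F Xo Xu eps_o"
  shows "\<forall>eps. continuous_on UNIV eps \<and> (\<forall>x. eps x > 0) \<and> (\<forall>x. eps x < eps_o x) \<longrightarrow>
           ((closure Xo \<inter> closure Xu = {} \<longrightarrow> closure Xu \<inter> closure (Kset F eps Xo) = {}) \<and>
            (closure Xo \<inter> Xu = {} \<longrightarrow> Xu \<inter> closure (Kset F eps Xo) = {}))"
proof (intro allI impI)
  fix eps :: "real^'n \<Rightarrow> real"
  assume H: "continuous_on UNIV eps \<and> (\<forall>x. eps x > 0) \<and> (\<forall>x. eps x < eps_o x)"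
  have ce: "continuous_on UNIV eps" and pos: "\<And>x. eps x > 0" and lt: "\<And>x. eps x < eps_o x"
    using H by auto
  have cpt: "\<And>x. F x \<noteq> {} \<and> compact (F x)" using assms(2) by blast
  have key: "\<exists>\<rho>>0. ball y \<rho> \<inter> Xu = {}"
    if "y \<notin> closure Xo" "y \<in> closure (Kset F eps Xo)" for y
    by (rule reach_nbhd[OF assms(1) cpt assms(4) ce pos lt that])
  show "(closure Xo \<inter> closure Xu = {} \<longrightarrow> closure Xu \<inter> closure (Kset F eps Xo) = {}) \<and>
            (closure Xo \<inter> Xu = {} \<longrightarrow> Xu \<inter> closure (Kset F eps Xo) = {})"
  proof (intro conjI impI)
    assume D: "closure Xo \<inter> closure Xu = {}"
    show "closure Xu \<inter> closure (Kset F eps Xo) = {}"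
    proof (rule ccontr)
      assume "closure Xu \<inter> closure (Kset F eps Xo) \<noteq> {}"
      then obtain y where y: "y \<in> closure Xu" "y \<in> closure (Kset F eps Xo)" by blast
      hence "y \<notin> closure Xo" using D by blast
      then obtain \<rho> where \<rho>: "\<rho> > 0" "ball y \<rho> \<inter> Xu = {}" using key y(2) by blast
      obtain u where "u \<in> Xu" "dist u y < \<rho>" using y(1) \<rho>(1) unfolding closure_approachable by blast
      hence "u \<in> ball y \<rho> \<inter> Xu" by (simp add: dist_commute)
      thus False using \<rho>(2) by blast
    qed
  next
    assume D: "closure Xo \<inter> Xu = {}"
    show "Xu \<inter> closure (Kset F eps Xo) = {}"
    proof (rule ccontr)
      assume "Xu \<inter> closure (Kset F eps Xo) \<noteq> {}"
      then obtain y where y: "y \<in> Xu" "y \<in> closure (Kset F eps Xo)" by blast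
      hence "y \<notin> closure Xo" using D by blast
      then obtain \<rho> where \<rho>: "\<rho> > 0" "ball y \<rho> \<inter> Xu = {}" using key y(2) by blast
      have "y \<in> ball y \<rho>" using \<rho>(1) by simp
      thus False using \<rho>(2) y(1) by blast
    qed
  qed
qed

end
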